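(* Consider the clique inference problem with nonnegative vertex potentials and the Potts clique potential $C(\mathbf{v})=\lambda\sum_{v\in V}n_v(\mathbf{v})^2$ with $\lambda>0$. Let $\hat{\mathbf{v}}$ be the assignment returned by the $\alpha$-pass algorithm and $\mathbf{v}^*$ an assignment maximizing $F$. Then $F(\hat{\mathbf{v}})\ge\frac{13}{15}F(\mathbf{v}^* )$.
   Context: Clique inference problem: there are $n$ vertices $1,\dots,n$, a finite set $V$ of values ($|V|\ge 2$), real vertex potentials $\psi_{jv}$ ($1\le j\le n$, $v\in V$), and a clique potential $C$ depending only on the counts $n_v(\mathbf{v})=|\{j:v_j=v\}|$. The objective is $F(\mathbf{v})=\sum_{j=1}^n\psi_{jv_j}+C(\mathbf{v})$ over $\mathbf{v}\in V^n$. The $\alpha$-pass algorithm: for each $\alpha\in V$, sort the vertices in decreasing order of $\psi_{j\alpha}-\max_{v\neq\alpha}\psi_{jv}$; for each $k\in\{1,\dots,n\}$ form the assignment giving the first $k$ sorted vertices the value $\alpha$ and every other vertex a value $v\ne\alpha$ maximizing $\psi_{jv}$; output the formed assignment with the largest $F$ over all $\alpha$ and $k$. *)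

theory Defs
  imports Complex_Main
begin

definition assignments :: "nat \<Rightarrow> 'v set \<Rightarrow> (nat \<Rightarrow> 'v) set" where
  "assignments n V = {x. \<forall>j\<in>{1..n}. x j \<in> V}"

definition cnt :: "nat \<Rightarrow> (nat \<Rightarrow> 'v) \<Rightarrow> 'v \<Rightarrow> nat" where
  "cnt n x v = card {j \<in> {1..n}. x j = v}"

definition potts :: "real \<Rightarrow> nat \<Rightarrow> 'v set \<Rightarrow> (nat \<Rightarrow> 'v) \<Rightarrow> real" where
  "potts lam n V x = lam * (\<Sum>v\<in>V. (real (cnt n x v))^2)"

definition objF :: "nat \<Rightarrow> 'v set \<Rightarrow> (nat \<Rightarrow> 'v \<Rightarrow> real) \<Rightarrow> real \<Rightarrow> (nat \<Rightarrow> 'v) \<Rightarrow> real" where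
  "objF n V psi lam x = (\<Sum>j\<in>{1..n}. psi j (x j)) + potts lam n V x"

definition maxother :: "'v set \<Rightarrow> (nat \<Rightarrow> 'v \<Rightarrow> real) \<Rightarrow> 'v \<Rightarrow> nat \<Rightarrow> real" where
  "maxother V psi \<alpha> j = Max (psi j ` (V - {\<alpha>}))"

text \<open>Admissible tie-breaking choices of the alpha-pass algorithm:
  ord \<alpha> i is the i-th vertex in the sorted order for \<alpha> (a bijection of {1..n},
  sorted decreasingly by psi j \<alpha> - maxother), and best \<alpha> j is a value
  different from \<alpha> maximizing psi j.\<close>
definition valid_choices ::
  "nat \<Rightarrow> 'v set \<Rightarrow> (nat \<Rightarrow> 'v \<Rightarrow> real) \<Rightarrow> ('v \<Rightarrow> nat \<Rightarrow> nat) \<Rightarrow> ('v \<Rightarrow> nat \<Rightarrow> 'v) \<Rightarrow> bool" where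
  "valid_choices n V psi ord best \<longleftrightarrow>
     (\<forall>\<alpha>\<in>V.
        bij_betw (ord \<alpha>) {1..n} {1..n}
      \<and> (\<forall>i\<in>{1..n}. \<forall>i'\<in>{1..n}. i \<le> i' \<longrightarrow>
           psi (ord \<alpha> i') \<alpha> - maxother V psi \<alpha> (ord \<alpha> i')
             \<le> psi (ord \<alpha> i) \<alpha> - maxother V psi \<alpha> (ord \<alpha> i))
      \<and> (\<forall>j\<in>{1..n}. best \<alpha> j \<in> V - {\<alpha>} \<and> psi j (best \<alpha> j) = maxother V psi \<alpha> j))"

definition pass_assignment ::
  "nat \<Rightarrow> ('v \<Rightarrow> nat \<Rightarrow> nat) \<Rightarrow> ('v \<Rightarrow> nat \<Rightarrow> 'v) \<Rightarrow> 'v \<Rightarrow> nat \<Rightarrow> (nat \<Rightarrow> 'v)" where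
  "pass_assignment n ord best \<alpha> k =
     (\<lambda>j. if j \<in> ord \<alpha> ` {1..k} then \<alpha> else best \<alpha> j)"

definition alpha_pass_candidates ::
  "nat \<Rightarrow> 'v set \<Rightarrow> ('v \<Rightarrow> nat \<Rightarrow> nat) \<Rightarrow> ('v \<Rightarrow> nat \<Rightarrow> 'v) \<Rightarrow> (nat \<Rightarrow> 'v) set" where
  "alpha_pass_candidates n V ord best =
     {pass_assignment n ord best \<alpha> k | \<alpha> k. \<alpha> \<in> V \<and> k \<in> {1..n}}"

end

theory Submission
  imports Defs
begin

lemma topk:
  fixes g :: "nat \<Rightarrow> real"
  assumes anti: "\<And>i i'. i \<in> {1..n} \<Longrightarrow> i' \<in> {1..n} \<Longrightarrow> i \<le> i' \<Longrightarrow> g i' \<le> g i"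
    and I: "I \<subseteq> {1..n}" and cI: "card I = k" and kn: "k \<le> n"
  shows "sum g I \<le> sum g {1..k}"
proof (cases "k = 0")
  case True
  then have "I = {}" using cI I finite_subset by (metis card_eq_0_iff finite_atLeastAtMost)
  then show ?thesis using True by simp
next
  case False
  have fI: "finite I" using I finite_subset by blast
  define A where "A = {1..k} - I"
  define B where "B = I - {1..k}"
  have cA: "card A = k - card ({1..k} \<inter> I)" unfolding A_def
    by (simp add: card_Diff_subset_Int)
  have cB: "card B = k - card ({1..k} \<inter> I)" unfolding B_def using cI fI
    by (simp add: card_Diff_subset_Int Int_commute)
  have s1: "sum g {1..k} = sum g A + sum g ({1..k} \<inter> I)" unfolding A_def
    by (metis Diff_Diff_Int Diff_subset finite_atLeastAtMost inf.absorb_iff2 inf_le1 sum.subset_diff)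
  have s2: "sum g I = sum g B + sum g ({1..k} \<inter> I)" unfolding B_def
    by (metis Int_commute fI sum.Int_Diff add.commute)
  have kin: "k \<in> {1..n}" using False kn by auto
  have "sum g B \<le> sum (\<lambda>_. g k) B"
  proof (rule sum_mono)
    fix i assume "i \<in> B"
    then have "i \<in> {1..n}" "k \<le> i" using I unfolding B_def by auto
    then show "g i \<le> g k" using anti kin by blast
  qed
  also have "\<dots> = sum (\<lambda>_. g k) A" using cA cB by simp
  also have "\<dots> \<le> sum g A"
  proof (rule sum_mono)
    fix i assume "i \<in> A"
    then have "i \<in> {1..n}" "i \<le> k" using kn unfolding A_def by auto
    then show "g k \<le> g i" using anti kin by blast
  qed
  finally show ?thesis using s1 s2 by linarith
qed

lemma key:
  assumes finV: "finite V" and lam_pos: "lam > 0"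
    and choices: "valid_choices n V psi ord best"
    and a: "a \<in> V" and k: "k \<in> {1..n}" and U: "U \<subseteq> {1..n}" and cU: "card U = k"
    and u: "\<forall>j\<in>{1..n} - U. u j \<in> V - {a}"
  shows "(\<Sum>j\<in>U. psi j a) + (\<Sum>j\<in>{1..n} - U. psi j (u j)) + lam * (real k)^2
         \<le> objF n V psi lam (pass_assignment n ord best a k)"
proof -
  define x where "x = pass_assignment n ord best a k"
  define T where "T = ord a ` {1..k}"
  define mo where "mo = maxother V psi a"
  define d where "d = (\<lambda>j. psi j a - mo j)"
  have bij: "bij_betw (ord a) {1..n} {1..n}"
    and sorted: "\<forall>i\<in>{1..n}. \<forall>i'\<in>{1..n}. i \<le> i' \<longrightarrow> d (ord a i') \<le> d (ord a i)"
    and bst: "\<forall>j\<in>{1..n}. best a j \<in> V - {a} \<and> psi j (best a j) = mo j"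
    using choices a unfolding valid_choices_def d_def mo_def by auto
  have inj: "inj_on (ord a) {1..n}" using bij bij_betw_def by blast
  have kn: "k \<le> n" using k by auto
  have Tsub: "T \<subseteq> {1..n}" unfolding T_def using bij kn
    by (metis atLeastatMost_subset_iff bij_betw_def image_mono le_refl)
  have cT: "card T = k" unfolding T_def
    by (metis card_atLeastAtMost diff_Suc_1 card_image inj inj_on_subset atLeastatMost_subset_iff le_refl kn)
  have xT: "\<And>j. j \<in> T \<Longrightarrow> x j = a" unfolding x_def T_def pass_assignment_def by auto
  have xnT: "\<And>j. j \<notin> T \<Longrightarrow> x j = best a j" unfolding x_def T_def pass_assignment_def by auto
  have vx: "(\<Sum>j\<in>{1..n}. psi j (x j)) = (\<Sum>j\<in>T. psi j a) + (\<Sum>j\<in>{1..n} - T. mo j)"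
  proof -
    have "(\<Sum>j\<in>{1..n}. psi j (x j)) = (\<Sum>j\<in>T. psi j (x j)) + (\<Sum>j\<in>{1..n} - T. psi j (x j))"
      using Tsub by (metis finite_atLeastAtMost sum.subset_diff add.commute)
    also have "(\<Sum>j\<in>T. psi j (x j)) = (\<Sum>j\<in>T. psi j a)" using xT by simp
    also have "(\<Sum>j\<in>{1..n} - T. psi j (x j)) = (\<Sum>j\<in>{1..n} - T. mo j)"
      using xnT bst by (intro sum.cong) auto
    finally show ?thesis .
  qed
  have dec: "\<And>W. W \<subseteq> {1..n} \<Longrightarrow> (\<Sum>j\<in>W. psi j a) + (\<Sum>j\<in>{1..n} - W. mo j) = (\<Sum>j\<in>W. d j) + (\<Sum>j\<in>{1..n}. mo j)"
  proof -
    fix W :: "nat set" assume W: "W \<subseteq> {1..n}"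
    have "(\<Sum>j\<in>{1..n}. mo j) = (\<Sum>j\<in>W. mo j) + (\<Sum>j\<in>{1..n} - W. mo j)"
      using W by (metis finite_atLeastAtMost sum.subset_diff add.commute)
    then show "(\<Sum>j\<in>W. psi j a) + (\<Sum>j\<in>{1..n} - W. mo j) = (\<Sum>j\<in>W. d j) + (\<Sum>j\<in>{1..n}. mo j)"
      unfolding d_def by (simp add: sum_subtractf)
  qed
  have umo: "(\<Sum>j\<in>{1..n} - U. psi j (u j)) \<le> (\<Sum>j\<in>{1..n} - U. mo j)"
  proof (rule sum_mono)
    fix j assume "j \<in> {1..n} - U"
    then have "u j \<in> V - {a}" using u by blast
    then show "psi j (u j) \<le> mo j" unfolding mo_def maxother_def using finV by (simp add: Max_ge)
  qed
  define I where "I = {i\<in>{1..n}. ord a i \<in> U}"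
  have UI: "U = ord a ` I"
  proof
    show "ord a ` I \<subseteq> U" unfolding I_def by auto
    show "U \<subseteq> ord a ` I"
    proof
      fix y assume y: "y \<in> U"
      then have "y \<in> ord a ` {1..n}" using U bij unfolding bij_betw_def by auto
      then obtain i where "i \<in> {1..n}" "y = ord a i" by auto
      then show "y \<in> ord a ` I" unfolding I_def using y by auto
    qed
  qed
  have injI: "inj_on (ord a) I" using inj unfolding I_def by (rule inj_on_subset) auto
  have cI: "card I = k" using cU UI injI card_image by metis
  have sU: "(\<Sum>j\<in>U. d j) = (\<Sum>i\<in>I. d (ord a i))" using UI injI sum.reindex by (metis comp_apply sum.reindex_cong)
  have injk: "inj_on (ord a) {1..k}" using inj by (rule inj_on_subset) (use kn in auto)
  have sT: "(\<Sum>j\<in>T. d j) = (\<Sum>i\<in>{1..k}. d (ord a i))" unfolding T_def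
    using injk by (simp add: sum.reindex)
  have "(\<Sum>i\<in>I. d (ord a i)) \<le> (\<Sum>i\<in>{1..k}. d (ord a i))"
    by (rule topk[where n=n]) (use sorted cI kn in \<open>auto simp: I_def\<close>)
  then have vbound: "(\<Sum>j\<in>U. psi j a) + (\<Sum>j\<in>{1..n} - U. psi j (u j)) \<le> (\<Sum>j\<in>{1..n}. psi j (x j))"
    using dec[OF U] dec[OF Tsub] vx umo sU sT by linarith
  have "{j\<in>{1..n}. x j = a} = T"
  proof (intro equalityI subsetI)
    fix j assume j: "j \<in> {j\<in>{1..n}. x j = a}"
    show "j \<in> T"
    proof (rule ccontr)
      assume "j \<notin> T"
      then have "x j = best a j" by (rule xnT)
      moreover have "best a j \<noteq> a" using bst j by blast
      ultimately show False using j by simp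
    qed
  next
    fix j assume "j \<in> T" then show "j \<in> {j\<in>{1..n}. x j = a}" using Tsub xT by auto
  qed
  then have ca: "cnt n x a = k" unfolding cnt_def using cT by simp
  have "(real (cnt n x a))^2 \<le> (\<Sum>v\<in>V. (real (cnt n x v))^2)"
    using finV a by (intro member_le_sum) auto
  then have "lam * (real k)^2 \<le> potts lam n V x" unfolding potts_def using ca lam_pos by simp
  then show ?thesis using vbound unfolding objF_def x_def by linarith
qed

lemma card_fibers:
  assumes finV: "finite V" and W: "W \<subseteq> V"
  shows "card {j\<in>{1..n}. vstar j \<in> W} = (\<Sum>v\<in>W. cnt n vstar v)"
proof -
  let ?U = "{j\<in>{1..n}. vstar j \<in> W}"
  have fW: "finite W" using finV W finite_subset by blast
  have "(\<Sum>v\<in>W. \<Sum>j\<in>{x\<in>?U. vstar x = v}. (1::nat)) = (\<Sum>j\<in>?U. 1)"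
    by (rule sum.group) (use fW in auto)
  moreover have "\<And>v. v \<in> W \<Longrightarrow> {x\<in>?U. vstar x = v} = {j\<in>{1..n}. vstar j = v}" by auto
  ultimately show ?thesis unfolding cnt_def by simp
qed

lemma gen_bound:
  assumes finV: "finite V" and nonneg: "\<forall>j\<in>{1..n}. \<forall>v\<in>V. psi j v \<ge> 0"
    and lam_pos: "lam > 0"
    and choices: "valid_choices n V psi ord best"
    and vhat_max: "\<forall>x\<in>alpha_pass_candidates n V ord best. objF n V psi lam x \<le> M"
    and vstar_in: "vstar \<in> assignments n V"
    and a: "a \<in> W" and W: "W \<subseteq> V" and U1: "1 \<le> card {j\<in>{1..n}. vstar j \<in> W}"
  shows "(\<Sum>v\<in>V-W. \<Sum>j\<in>{j\<in>{1..n}. vstar j = v}. psi j v) + (\<Sum>j\<in>{j\<in>{1..n}. vstar j = a}. psi j a)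
     + lam * (real (card {j\<in>{1..n}. vstar j \<in> W}))^2 \<le> M"
proof -
  define U where "U = {j\<in>{1..n}. vstar j \<in> W}"
  define k where "k = card U"
  have Usub: "U \<subseteq> {1..n}" unfolding U_def by auto
  have kin: "k \<in> {1..n}" using U1 card_mono[OF _ Usub] unfolding k_def U_def by auto
  have aV: "a \<in> V" using a W by auto
  have vs: "\<forall>j\<in>{1..n}. vstar j \<in> V" using vstar_in unfolding assignments_def by auto
  have u: "\<forall>j\<in>{1..n} - U. vstar j \<in> V - {a}" using vs a unfolding U_def by auto
  have K: "(\<Sum>j\<in>U. psi j a) + (\<Sum>j\<in>{1..n} - U. psi j (vstar j)) + lam * (real k)^2
         \<le> objF n V psi lam (pass_assignment n ord best a k)"
    by (rule key[OF finV lam_pos choices aV kin Usub k_def[symmetric] u])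
  have "pass_assignment n ord best a k \<in> alpha_pass_candidates n V ord best"
    unfolding alpha_pass_candidates_def using aV kin by blast
  then have K2: "objF n V psi lam (pass_assignment n ord best a k) \<le> M" using vhat_max by blast
  have s1: "(\<Sum>j\<in>{j\<in>{1..n}. vstar j = a}. psi j a) \<le> (\<Sum>j\<in>U. psi j a)"
    by (rule sum_mono2) (use a nonneg aV in \<open>auto simp: U_def\<close>)
  have g1: "(\<Sum>v\<in>V-W. \<Sum>j\<in>{x\<in>{1..n} - U. vstar x = v}. psi j (vstar j)) = (\<Sum>j\<in>{1..n} - U. psi j (vstar j))"
    by (rule sum.group) (use finV vs in \<open>auto simp: U_def\<close>)
  have g2: "(\<Sum>v\<in>V-W. \<Sum>j\<in>{x\<in>{1..n} - U. vstar x = v}. psi j (vstar j))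
      = (\<Sum>v\<in>V-W. \<Sum>j\<in>{j\<in>{1..n}. vstar j = v}. psi j v)"
  proof (rule sum.cong[OF refl])
    fix v assume v: "v \<in> V - W"
    have "{x\<in>{1..n} - U. vstar x = v} = {j\<in>{1..n}. vstar j = v}" using v unfolding U_def by auto
    then show "(\<Sum>j\<in>{x\<in>{1..n} - U. vstar x = v}. psi j (vstar j)) = (\<Sum>j\<in>{j\<in>{1..n}. vstar j = v}. psi j v)"
      by simp
  qed
  have e: "{j\<in>{1..n}. vstar j \<in> W} = U" by (simp add: U_def)
  have A: "(\<Sum>v\<in>V-W. \<Sum>j\<in>{j\<in>{1..n}. vstar j = v}. psi j v) = (\<Sum>j\<in>{1..n} - U. psi j (vstar j))"
    using g1 g2 by simp
  have ck: "card {j\<in>{1..n}. vstar j \<in> W} = k" using e k_def by simp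
  have "(\<Sum>v\<in>V-W. \<Sum>j\<in>{j\<in>{1..n}. vstar j = v}. psi j v) + (\<Sum>j\<in>{j\<in>{1..n}. vstar j = a}. psi j a)
     + lam * (real (card {j\<in>{1..n}. vstar j \<in> W}))^2
     \<le> (\<Sum>j\<in>U. psi j a) + (\<Sum>j\<in>{1..n} - U. psi j (vstar j)) + lam * (real k)^2"
    unfolding A ck using s1 by simp
  also have "\<dots> \<le> M" using K K2 by (rule order_trans)
  finally show ?thesis .
qed
lemma pB: fixes a b c n :: real
  assumes h: "a \<ge> b" "b \<ge> c" "c \<ge> 0" "a+b+c \<le> n" "6*c \<le> n"
  shows "13*(a^2+b^2+c*(n-a-b)) \<le> 11*a^2 + 2*n^2 + 2*(a+b)^2"
proof -
  have g: "0 \<le> a-b" "0 \<le> b-c" "0 \<le> c" "0 \<le> n-a-b-c" "0 \<le> n-6*c" using h by auto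
  have p: "0 \<le> (a-b)*(a-b)"
    "0 \<le> (a-b)*(b-c)"
    "0 \<le> (a-b)*(c)"
    "0 \<le> (a-b)*(n-a-b-c)"
    "0 \<le> (a-b)*(n-6*c)"
    "0 \<le> (b-c)*(b-c)"
    "0 \<le> (b-c)*(c)"
    "0 \<le> (b-c)*(n-a-b-c)"
    "0 \<le> (b-c)*(n-6*c)"
    "0 \<le> (c)*(c)"
    "0 \<le> (c)*(n-a-b-c)"
    "0 \<le> (c)*(n-6*c)"
    "0 \<le> (n-a-b-c)*(n-a-b-c)"
    "0 \<le> (n-a-b-c)*(n-6*c)"
    "0 \<le> (n-6*c)*(n-6*c)"
    using g by (simp_all add: mult_nonneg_nonneg)
  show ?thesis using p unfolding power2_eq_square by (simp add: algebra_simps)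
qed
lemma pC1: fixes a b c n :: real
  assumes h: "a \<ge> b" "b \<ge> c" "c \<ge> 0" "a+b+2*c \<le> n" "n \<le> 6*c"
  shows "13*(a^2+b^2+c*(n-a-b)) \<le> 12*a^2 + 2*n^2 + (a+b+c)^2"
proof -
  have g: "0 \<le> a-b" "0 \<le> b-c" "0 \<le> c" "0 \<le> n-a-b-2*c" "0 \<le> 6*c-n" using h by auto
  have p: "0 \<le> (a-b)*(a-b)"
    "0 \<le> (a-b)*(b-c)"
    "0 \<le> (a-b)*(c)"
    "0 \<le> (a-b)*(n-a-b-2*c)"
    "0 \<le> (a-b)*(6*c-n)"
    "0 \<le> (b-c)*(b-c)"
    "0 \<le> (b-c)*(c)"
    "0 \<le> (b-c)*(n-a-b-2*c)"
    "0 \<le> (b-c)*(6*c-n)"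
    "0 \<le> (c)*(c)"
    "0 \<le> (c)*(n-a-b-2*c)"
    "0 \<le> (c)*(6*c-n)"
    "0 \<le> (n-a-b-2*c)*(n-a-b-2*c)"
    "0 \<le> (n-a-b-2*c)*(6*c-n)"
    "0 \<le> (6*c-n)*(6*c-n)"
    using g by (simp_all add: mult_nonneg_nonneg)
  show ?thesis using p unfolding power2_eq_square by (simp add: algebra_simps)
qed
lemma pC2: fixes a b c n :: real
  assumes h: "a \<ge> b" "b \<ge> c" "c \<ge> 0" "a+b+c \<le> n" "n \<le> a+b+2*c" "n \<le> 6*c"
  shows "13*(a^2+b^2+c^2+(n-a-b-c)^2) \<le> 12*a^2 + 2*n^2 + (a+b+c)^2"
proof -
  have F: "0 \<le> (a-b)*(a-b)" "0 \<le> (a-b)*(b-c)" "0 \<le> c*(a-b)" "0 \<le> (b-c)*(4*c-(b-c))"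
    "0 \<le> (n-a-b-c)*(4*(a+b+c) - 11*(n-a-b-c))"
    using h by (simp_all add: mult_nonneg_nonneg)
  have "12*a^2 + 2*n^2 + (a+b+c)^2 - 13*(a^2+b^2+c^2+(n-a-b-c)^2)
    = 2*((a-b)*(a-b)) + 10*((a-b)*(b-c)) + 16*(c*(a-b)) + 2*((b-c)*(4*c-(b-c)))
      + (n-a-b-c)*(4*(a+b+c) - 11*(n-a-b-c))"
    by (simp add: algebra_simps power2_eq_square)
  then show ?thesis using F by linarith
qed

lemma comb:
  fixes lam P A B M a b c n Q :: real
  assumes lam: "lam > 0" and h1: "P + lam*a^2 \<le> M" and h2: "A + lam*n^2 \<le> M"
    and h3: "P - A + lam*(a+b)^2 \<le> M"
    and h4: "B + lam*n^2 \<le> M" and h5: "P - A - B + lam*(a+b+c)^2 \<le> M"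
    and o: "a \<ge> b" "b \<ge> c" "c \<ge> 0" "a+b+c \<le> n"
    and Q1: "Q \<le> a^2+b^2+c*(n-a-b)"
    and Q2: "a+b+2*c \<le> n \<or> Q \<le> a^2+b^2+c^2+(n-a-b-c)^2"
  shows "13*(P + lam*Q) \<le> 15*M"
proof (cases "6*c \<le> n")
  case True
  have "13*(a^2+b^2+c*(n-a-b)) \<le> 11*a^2 + 2*n^2 + 2*(a+b)^2" using pB o True by blast
  then have "lam*(13*Q) \<le> lam*(11*a^2 + 2*n^2 + 2*(a+b)^2)" using Q1 lam
    by (intro mult_left_mono) auto
  then show ?thesis using h1 h2 h3 by (simp add: algebra_simps)
next
  case False
  show ?thesis
  proof (cases "a+b+2*c \<le> n")
    case True
    have "13*(a^2+b^2+c*(n-a-b)) \<le> 12*a^2 + 2*n^2 + (a+b+c)^2" using pC1 o True False by simp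
    then have "lam*(13*Q) \<le> lam*(12*a^2 + 2*n^2 + (a+b+c)^2)" using Q1 lam
      by (intro mult_left_mono) auto
    then show ?thesis using h1 h2 h4 h5 by (simp add: algebra_simps)
  next
    case F2: False
    then have Q: "Q \<le> a^2+b^2+c^2+(n-a-b-c)^2" using Q2 by blast
    have "13*(a^2+b^2+c^2+(n-a-b-c)^2) \<le> 12*a^2 + 2*n^2 + (a+b+c)^2" using pC2 o F2 False by simp
    then have "lam*(13*Q) \<le> lam*(12*a^2 + 2*n^2 + (a+b+c)^2)" using Q lam
      by (intro mult_left_mono) auto
    then show ?thesis using h1 h2 h4 h5 by (simp add: algebra_simps)
  qed
qed

lemma sum_two:
  assumes "finite V" "al \<in> V" "be \<in> V" "al \<noteq> be"
  shows "sum f V = f al + f be + sum f (V - {al, be})"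
proof -
  have "sum f V = f al + sum f (V - {al})" using assms by (simp add: sum.remove)
  moreover have "sum f (V - {al}) = f be + sum f (V - {al} - {be})" using assms by (simp add: sum.remove)
  moreover have "V - {al} - {be} = V - {al, be}" by auto
  ultimately show ?thesis by (simp add: add.assoc)
qed

lemma obtain_max:
  fixes f :: "'a \<Rightarrow> real"
  assumes "finite A" "A \<noteq> {}"
  shows "\<exists>x\<in>A. \<forall>y\<in>A. f y \<le> f x"
proof -
  have "Max (f ` A) \<in> f ` A" using assms by (intro Max_in) auto
  then obtain x where x: "x \<in> A" "f x = Max (f ` A)" by auto
  have "\<forall>y\<in>A. f y \<le> f x" using x assms by (auto intro: Max_ge)
  then show ?thesis using x by blast
qed

theorem theorem4:
  fixes n :: nat and V :: "'v set" and psi :: "nat \<Rightarrow> 'v \<Rightarrow> real" and lam :: real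
    and ord :: "'v \<Rightarrow> nat \<Rightarrow> nat" and best :: "'v \<Rightarrow> nat \<Rightarrow> 'v"
    and vhat vstar :: "nat \<Rightarrow> 'v"
  assumes finV: "finite V" and cardV: "card V \<ge> 2"
    and nonneg: "\<forall>j\<in>{1..n}. \<forall>v\<in>V. psi j v \<ge> 0"
    and lam_pos: "lam > 0"
    and choices: "valid_choices n V psi ord best"
    and vhat_cand: "vhat \<in> alpha_pass_candidates n V ord best"
    and vhat_max: "\<forall>x\<in>alpha_pass_candidates n V ord best. objF n V psi lam x \<le> objF n V psi lam vhat"
    and vstar_in: "vstar \<in> assignments n V"
    and vstar_opt: "\<forall>x\<in>assignments n V. objF n V psi lam x \<le> objF n V psi lam vstar"
  shows "objF n V psi lam vhat \<ge> 13 / 15 * objF n V psi lam vstar"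
proof -
  define M where "M = objF n V psi lam vhat"
  have vmax: "\<forall>x\<in>alpha_pass_candidates n V ord best. objF n V psi lam x \<le> M"
    using vhat_max M_def by simp
  have n1: "1 \<le> n" using vhat_cand unfolding alpha_pass_candidates_def by auto
  define c where "c v = real (cnt n vstar v)" for v
  define Pv where "Pv v = (\<Sum>j\<in>{j\<in>{1..n}. vstar j = v}. psi j v)" for v
  have vs: "\<forall>j\<in>{1..n}. vstar j \<in> V" using vstar_in unfolding assignments_def by auto
  have Pnn: "\<And>v. v \<in> V \<Longrightarrow> Pv v \<ge> 0" unfolding Pv_def using nonneg by (intro sum_nonneg) auto
  have cnn: "\<And>v. c v \<ge> 0" unfolding c_def by simp
  have vsum: "(\<Sum>j\<in>{1..n}. psi j (vstar j)) = (\<Sum>v\<in>V. Pv v)"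
  proof -
    have "(\<Sum>v\<in>V. \<Sum>j\<in>{x\<in>{1..n}. vstar x = v}. psi j (vstar j)) = (\<Sum>j\<in>{1..n}. psi j (vstar j))"
      by (rule sum.group) (use finV vs in auto)
    moreover have "(\<Sum>v\<in>V. \<Sum>j\<in>{x\<in>{1..n}. vstar x = v}. psi j (vstar j)) = (\<Sum>v\<in>V. Pv v)"
      unfolding Pv_def by (intro sum.cong refl) auto
    ultimately show ?thesis by simp
  qed
  have Fs: "objF n V psi lam vstar = (\<Sum>v\<in>V. Pv v) + lam * (\<Sum>v\<in>V. (c v)^2)"
    unfolding objF_def potts_def c_def using vsum by simp
  have cW: "\<And>W. W \<subseteq> V \<Longrightarrow> real (card {j\<in>{1..n}. vstar j \<in> W}) = (\<Sum>v\<in>W. c v)"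
    unfolding c_def using card_fibers[OF finV] by simp
  have "{j\<in>{1..n}. vstar j \<in> V} = {1..n}" using vs by auto
  then have csum: "(\<Sum>v\<in>V. c v) = real n" using cW[of V] by simp
  have GB: "\<And>a W. a \<in> W \<Longrightarrow> W \<subseteq> V \<Longrightarrow> 1 \<le> (\<Sum>v\<in>W. c v) \<Longrightarrow>
      (\<Sum>v\<in>V-W. Pv v) + Pv a + lam * (\<Sum>v\<in>W. c v)^2 \<le> M"
  proof -
    fix a W assume a: "a \<in> W" and W: "W \<subseteq> V" and c1: "1 \<le> (\<Sum>v\<in>W. c v)"
    have "1 \<le> card {j\<in>{1..n}. vstar j \<in> W}" using c1 cW[OF W] by linarith
    from gen_bound[OF finV nonneg lam_pos choices vmax vstar_in a W this]
    show "(\<Sum>v\<in>V-W. Pv v) + Pv a + lam * (\<Sum>v\<in>W. c v)^2 \<le> M"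
      unfolding Pv_def cW[OF W] .
  qed
  have Vne: "V \<noteq> {}" using cardV by auto
  obtain al where al: "al \<in> V" "\<forall>v\<in>V. c v \<le> c al" using obtain_max[OF finV Vne] by blast
  have V1: "V - {al} \<noteq> {}"
  proof
    assume "V - {al} = {}"
    then have "V \<subseteq> {al}" by auto
    then have "card V \<le> 1" using card_mono[of "{al}" V] by simp
    then show False using cardV by simp
  qed
  obtain be where be: "be \<in> V - {al}" "\<forall>v\<in>V - {al}. c v \<le> c be"
    using obtain_max[of "V - {al}" c] finV V1 by auto
  define a where "a = c al"
  define b where "b = c be"
  have ab: "b \<le> a" using al be unfolding a_def b_def by auto
  have a1: "1 \<le> a"
  proof (rule ccontr)
    assume "\<not> 1 \<le> a"
    then have "\<forall>v\<in>V. c v < 1" using al unfolding a_def by force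
    then have "\<forall>v\<in>V. cnt n vstar v = 0" unfolding c_def by auto
    then have "(\<Sum>v\<in>V. c v) = 0" unfolding c_def by simp
    then show False using csum n1 by simp
  qed
  have albe: "al \<noteq> be" using be by auto
  define X where "X = V - {al, be}"
  have fX: "finite X" using finV X_def by auto
  have sP: "(\<Sum>v\<in>V. Pv v) = Pv al + Pv be + (\<Sum>v\<in>X. Pv v)"
    using sum_two[OF finV al(1) _ albe, where f="Pv"] be unfolding X_def a_def b_def by simp
  have sPal: "(\<Sum>v\<in>V-{al}. Pv v) = Pv be + (\<Sum>v\<in>X. Pv v)"
  proof -
    have "V - {al} - {be} = X" unfolding X_def by auto
    then show ?thesis using finV be sum.remove[of "V-{al}" be Pv] by simp
  qed
  have sQ: "(\<Sum>v\<in>V. (c v)^2) = a^2 + b^2 + (\<Sum>v\<in>X. (c v)^2)"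
    using sum_two[OF finV al(1) _ albe, where f="(\<lambda>v. (c v)^2)"] be unfolding X_def a_def b_def by simp
  have sC: "(\<Sum>v\<in>V. c v) = a + b + (\<Sum>v\<in>X. c v)"
    using sum_two[OF finV al(1) _ albe, where f="c"] be unfolding X_def a_def b_def by simp
  define P where "P = (\<Sum>v\<in>V. Pv v)"
  define Q where "Q = (\<Sum>v\<in>V. (c v)^2)"
  have h1: "P + lam*a^2 \<le> M"
    using GB[of al "{al}"] al a1 sP sPal unfolding P_def a_def by simp
  have h2: "Pv al + lam*(real n)^2 \<le> M"
    using GB[of al V] al a1 csum n1 by simp
  have h3: "P - Pv al + lam*(a+b)^2 \<le> M"
  proof -
    have e: "(\<Sum>v\<in>{al,be}. c v) = a + b" using albe unfolding a_def b_def by simp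
    have "(\<Sum>v\<in>X. Pv v) + Pv be + lam * (a+b)^2 \<le> M"
      using GB[of be "{al,be}"] al be e a1 cnn[of be] unfolding X_def b_def by simp
    then show ?thesis using sP unfolding P_def by simp
  qed
  have h4: "Pv be + lam*(real n)^2 \<le> M"
    using GB[of be V] be a1 csum n1 by simp
  have Ma: "13 * (P + lam*Q) \<le> 15 * M"
  proof (cases "X = {}")
    case True
    have "13*(P + lam*Q) \<le> 15*M"
    proof (rule comb[OF lam_pos h1 h2 h3 h4, where c=0])
      show "P - Pv al - Pv be + lam * (a + b + 0)^2 \<le> M" using h3 Pnn[of be] be by simp
      show "b \<le> a" by (rule ab)
      show "0 \<le> b" using cnn unfolding b_def by simp
      show "a + b + 0 \<le> real n" using csum sC True by simp
      show "Q \<le> a^2 + b^2 + 0 * (real n - a - b)" using sQ True unfolding Q_def by simp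
      show "a + b + 2*0 \<le> real n \<or> Q \<le> a^2 + b^2 + 0^2 + (real n - a - b - 0)^2"
        using csum sC True by simp
    qed simp
    then show ?thesis .
  next
    case False
    obtain ga where ga: "ga \<in> X" "\<forall>v\<in>X. c v \<le> c ga" using obtain_max[OF fX False] by blast
    define g where "g = c ga"
    define Y where "Y = X - {ga}"
    have fY: "finite Y" using fX Y_def by auto
    have gb: "g \<le> b" using ga be unfolding g_def b_def X_def by auto
    have sPX: "(\<Sum>v\<in>X. Pv v) = Pv ga + (\<Sum>v\<in>Y. Pv v)" using fX ga unfolding Y_def by (simp add: sum.remove)
    have sQX: "(\<Sum>v\<in>X. (c v)^2) = g^2 + (\<Sum>v\<in>Y. (c v)^2)" using fX ga unfolding Y_def g_def by (simp add: sum.remove)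
    have sCX: "(\<Sum>v\<in>X. c v) = g + (\<Sum>v\<in>Y. c v)" using fX ga unfolding Y_def g_def by (simp add: sum.remove)
    define r where "r = (\<Sum>v\<in>Y. c v)"
    have rn: "r = real n - a - b - g" using csum sC sCX unfolding r_def by simp
    have r0: "r \<ge> 0" unfolding r_def using cnn by (simp add: sum_nonneg)
    have Yg: "\<forall>v\<in>Y. c v \<le> g" using ga unfolding Y_def g_def by auto
    have Yr: "\<forall>v\<in>Y. c v \<le> r" unfolding r_def using fY cnn by (auto intro: member_le_sum)
    have q1a: "(\<Sum>v\<in>Y. (c v)^2) \<le> (\<Sum>v\<in>Y. g * c v)"
    proof (rule sum_mono)
      fix v assume v: "v \<in> Y"
      show "(c v)^2 \<le> g * c v" unfolding power2_eq_square using Yg v cnn[of v] by (intro mult_right_mono) auto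
    qed
    have q1: "(\<Sum>v\<in>Y. (c v)^2) \<le> g * r" using q1a unfolding r_def by (simp add: sum_distrib_left)
    have q2a: "(\<Sum>v\<in>Y. (c v)^2) \<le> (\<Sum>v\<in>Y. r * c v)"
    proof (rule sum_mono)
      fix v assume v: "v \<in> Y"
      show "(c v)^2 \<le> r * c v" unfolding power2_eq_square using Yr v cnn[of v] by (intro mult_right_mono) auto
    qed
    have q2: "(\<Sum>v\<in>Y. (c v)^2) \<le> r * r" using q2a by (simp add: sum_distrib_left[symmetric] r_def)
    have W3: "{al, be, ga} \<subseteq> V" using al be ga unfolding X_def by auto
    have d3: "al \<noteq> ga" "be \<noteq> ga" using ga unfolding X_def by auto
    have e3: "(\<Sum>v\<in>{al,be,ga}. c v) = a + b + g" using albe d3 unfolding a_def b_def g_def by simp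
    have VW: "V - {al,be,ga} = Y" unfolding Y_def X_def by auto
    have h5: "P - Pv al - Pv be + lam*(a+b+g)^2 \<le> M"
    proof -
      have "(\<Sum>v\<in>Y. Pv v) + Pv ga + lam*(a+b+g)^2 \<le> M"
        using GB[of ga "{al,be,ga}"] W3 e3 a1 cnn[of be] cnn[of ga] VW unfolding b_def g_def by simp
      then show ?thesis using sP sPX unfolding P_def by simp
    qed
    show ?thesis
    proof (rule comb[OF lam_pos h1 h2 h3 h4 h5 ab])
      show "g \<le> b" by (rule gb)
      show "0 \<le> g" using cnn unfolding g_def by simp
      show "a + b + g \<le> real n" using rn r0 by simp
      show "Q \<le> a^2 + b^2 + g * (real n - a - b)"
        using sQ sQX q1 rn unfolding Q_def by (simp add: algebra_simps power2_eq_square)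
      show "a + b + 2*g \<le> real n \<or> Q \<le> a^2 + b^2 + g^2 + (real n - a - b - g)^2"
        using sQ sQX q2 rn unfolding Q_def by (simp add: algebra_simps power2_eq_square)
    qed
  qed
  have "objF n V psi lam vstar = P + lam * Q" using Fs unfolding P_def Q_def by simp
  then show ?thesis using Ma unfolding M_def by simp
qed

end
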